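(* Let $H$ be a binary tree based graph, $M$ a pseudomatching of $H$, $S$ a set of literals with $Vars(S)=V(H)\setminus\bigcup M$ that is $1$-comfortable w.r.t. $M$, and $\varphi\in{\bf CNF}(M)$. Then $\Pr({\bf ES}(\varphi)\mid{\bf EC}(S))=(2/3)^{|M|}$.
   Context: Sets of literals never contain a variable together with its negation; $Vars(S)$ is the set of variables occurring in $S$. A rooted tree is extended if none of its leaves has a sibling. A graph $H$ is a binary tree based graph if it is the edge-disjoint union of extended rooted trees $T_1,\dots,T_m$ with roots $t_1,\dots,t_m$ such that every leaf of some $T_i$ is a leaf of exactly two of the trees, and any two trees have at most one common vertex, which is a leaf of both. Vertices are root vertices, leaf vertices, and internal vertices (the rest); two internal vertices are siblings if they are siblings in the tree containing them. $T_i,T_j$ are adjacent if they share a leaf $\ell_{i,j}$; $P_{i,j}$ is the path between $t_i$ and $t_j$ in $T_i\cup T_j$; $P^{1/2}_{i\to j}$ is the path in $T_i$ from $t_i$ to $\ell_{i,j}$. A pseudoedge is a pair $\{t_i,t_j\}$ with $T_i,T_j$ adjacent; a pseudomatching is a set of pairwise disjoint pseudoedges; $\bigcup M$ is the set of their ends. $\phi_H$ is the CNF on variables $V(H)$ with a clause $C_{i,j}$ (positive literals of $V(P_{i,j})$) for each pseudoedge. ${\bf CNF}(M)$ is the set of CNFs consisting, for each $\{t_i,t_j\}\in M$, of one clause that is either the disjunction of positive literals of $V(P^{1/2}_{i\to j})$ or of $V(P^{1/2}_{j\to i})$. $S$ falsifies a clause if all its variables occur negatively in $S$. $S$ respects $\{t_i,t_j\}$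 if all non-root variables of $C_{i,j}$ occur negatively in $S$ and the siblings of all internal variables of $C_{i,j}$ occur positively in $S$. $S$ is $1$-comfortable w.r.t. $M$ if it falsifies no clause of $\phi_H$ and respects every pseudoedge of $M$. The positive literal $\ell_{i,j}$ is fixed w.r.t. $S'$ if $\ell_{i,j}\in S'$ and all other variables of $C_{i,j}$ occur negatively in $S'$; $Fix(S')$ is the set of fixed literals. ${\bf SAT}(H)$ is the set of satisfying assignments of $\phi_H$; each $S'\in{\bf SAT}(H)$ has probability $(1/2)^{|V(H)\setminus Fix(S')|}$. ${\bf EC}(S)=\{S'\in{\bf SAT}(H):S\subseteq S'\}$; ${\bf ES}(\varphi)=\{S'\in{\bf SAT}(H): S'\text{ satisfies }\varphi\}$. *)

theory Defs
  imports Complex_Main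
begin

text \<open>
A binary tree based graph H is given by a finite index set I of trees;
tree T_i has vertex set V i, root rt i and parent function par i (only meaningful on
non-root vertices of V i). The edges of T_i are {v, par i v} for v in V i - {rt i}.
Sets of literals (never containing a variable and its negation) are partial maps
'v \<rightharpoonup> bool: S v = Some True means the positive literal v is in S, Some False the
negative one; Vars(S) = dom S.
\<close>

definition rooted_tree :: "'v set \<Rightarrow> 'v \<Rightarrow> ('v \<Rightarrow> 'v) \<Rightarrow> bool" where
  "rooted_tree Vt r p \<longleftrightarrow> finite Vt \<and> r \<in> Vt \<and>
     (\<forall>v \<in> Vt - {r}. p v \<in> Vt) \<and> (\<forall>v \<in> Vt. \<exists>n. (p ^^ n) v = r)"

definition children :: "('i \<Rightarrow> 'v set) \<Rightarrow> ('i \<Rightarrow> 'v) \<Rightarrow> ('i \<Rightarrow> 'v \<Rightarrow> 'v) \<Rightarrow> 'i \<Rightarrow> 'v \<Rightarrow> 'v set" where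
  "children V rt par i u = {v \<in> V i - {rt i}. par i v = u}"

definition is_leaf :: "('i \<Rightarrow> 'v set) \<Rightarrow> ('i \<Rightarrow> 'v) \<Rightarrow> ('i \<Rightarrow> 'v \<Rightarrow> 'v) \<Rightarrow> 'i \<Rightarrow> 'v \<Rightarrow> bool" where
  "is_leaf V rt par i v \<longleftrightarrow> v \<in> V i \<and> v \<noteq> rt i \<and> children V rt par i v = {}"

definition extended :: "('i \<Rightarrow> 'v set) \<Rightarrow> ('i \<Rightarrow> 'v) \<Rightarrow> ('i \<Rightarrow> 'v \<Rightarrow> 'v) \<Rightarrow> 'i \<Rightarrow> bool" where
  "extended V rt par i \<longleftrightarrow>
     (\<forall>v. is_leaf V rt par i v \<longrightarrow> children V rt par i (par i v) = {v})"

definition btbg :: "'i set \<Rightarrow> ('i \<Rightarrow> 'v set) \<Rightarrow> ('i \<Rightarrow> 'v) \<Rightarrow> ('i \<Rightarrow> 'v \<Rightarrow> 'v) \<Rightarrow> bool" where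
  "btbg I V rt par \<longleftrightarrow> finite I \<and>
     (\<forall>i \<in> I. rooted_tree (V i) (rt i) (par i) \<and> extended V rt par i) \<and>
     (\<forall>i \<in> I. \<forall>v. is_leaf V rt par i v \<longrightarrow> card {j \<in> I. is_leaf V rt par j v} = 2) \<and>
     (\<forall>i \<in> I. \<forall>j \<in> I. i \<noteq> j \<longrightarrow>
        (\<forall>v \<in> V i \<inter> V j. \<forall>w \<in> V i \<inter> V j. v = w) \<and>
        (\<forall>v \<in> V i \<inter> V j. is_leaf V rt par i v \<and> is_leaf V rt par j v))"

definition VH :: "'i set \<Rightarrow> ('i \<Rightarrow> 'v set) \<Rightarrow> 'v set" where
  "VH I V = (\<Union>i \<in> I. V i)"

definition is_root_vertex :: "'i set \<Rightarrow> ('i \<Rightarrow> 'v) \<Rightarrow> 'v \<Rightarrow> bool" where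
  "is_root_vertex I rt v \<longleftrightarrow> v \<in> rt ` I"

definition is_leaf_vertex :: "'i set \<Rightarrow> ('i \<Rightarrow> 'v set) \<Rightarrow> ('i \<Rightarrow> 'v) \<Rightarrow> ('i \<Rightarrow> 'v \<Rightarrow> 'v) \<Rightarrow> 'v \<Rightarrow> bool" where
  "is_leaf_vertex I V rt par v \<longleftrightarrow> (\<exists>i \<in> I. is_leaf V rt par i v)"

definition is_internal :: "'i set \<Rightarrow> ('i \<Rightarrow> 'v set) \<Rightarrow> ('i \<Rightarrow> 'v) \<Rightarrow> ('i \<Rightarrow> 'v \<Rightarrow> 'v) \<Rightarrow> 'v \<Rightarrow> bool" where
  "is_internal I V rt par v \<longleftrightarrow> v \<in> VH I V \<and> \<not> is_root_vertex I rt v \<and> \<not> is_leaf_vertex I V rt par v"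

definition siblings :: "'i set \<Rightarrow> ('i \<Rightarrow> 'v set) \<Rightarrow> ('i \<Rightarrow> 'v) \<Rightarrow> ('i \<Rightarrow> 'v \<Rightarrow> 'v) \<Rightarrow> 'v \<Rightarrow> 'v \<Rightarrow> bool" where
  "siblings I V rt par v w \<longleftrightarrow> is_internal I V rt par v \<and> is_internal I V rt par w \<and> v \<noteq> w \<and>
     (\<exists>i \<in> I. v \<in> V i - {rt i} \<and> w \<in> V i - {rt i} \<and> par i v = par i w)"

definition adjacent :: "'i set \<Rightarrow> ('i \<Rightarrow> 'v set) \<Rightarrow> ('i \<Rightarrow> 'v) \<Rightarrow> ('i \<Rightarrow> 'v \<Rightarrow> 'v) \<Rightarrow> 'i \<Rightarrow> 'i \<Rightarrow> bool" where
  "adjacent I V rt par i j \<longleftrightarrow> i \<in> I \<and> j \<in> I \<and> i \<noteq> j \<and>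
     (\<exists>l. is_leaf V rt par i l \<and> is_leaf V rt par j l)"

definition common_leaf :: "('i \<Rightarrow> 'v set) \<Rightarrow> ('i \<Rightarrow> 'v) \<Rightarrow> ('i \<Rightarrow> 'v \<Rightarrow> 'v) \<Rightarrow> 'i \<Rightarrow> 'i \<Rightarrow> 'v" where
  "common_leaf V rt par i j = (THE l. is_leaf V rt par i l \<and> is_leaf V rt par j l)"

definition path_to_root :: "('i \<Rightarrow> 'v) \<Rightarrow> ('i \<Rightarrow> 'v \<Rightarrow> 'v) \<Rightarrow> 'i \<Rightarrow> 'v \<Rightarrow> 'v set" where
  "path_to_root rt par i v =
     {(par i ^^ k) v | k. k \<le> (LEAST n. (par i ^^ n) v = rt i)}"

definition half_path :: "('i \<Rightarrow> 'v set) \<Rightarrow> ('i \<Rightarrow> 'v) \<Rightarrow> ('i \<Rightarrow> 'v \<Rightarrow> 'v) \<Rightarrow> 'i \<Rightarrow> 'i \<Rightarrow> 'v set" where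
  "half_path V rt par i j = path_to_root rt par i (common_leaf V rt par i j)"

text \<open>V(P_{i,j}), i.e. the variables of the clause C_{i,j} (all positive).\<close>
definition full_path :: "('i \<Rightarrow> 'v set) \<Rightarrow> ('i \<Rightarrow> 'v) \<Rightarrow> ('i \<Rightarrow> 'v \<Rightarrow> 'v) \<Rightarrow> 'i \<Rightarrow> 'i \<Rightarrow> 'v set" where
  "full_path V rt par i j = half_path V rt par i j \<union> half_path V rt par j i"

definition pseudoedges :: "'i set \<Rightarrow> ('i \<Rightarrow> 'v set) \<Rightarrow> ('i \<Rightarrow> 'v) \<Rightarrow> ('i \<Rightarrow> 'v \<Rightarrow> 'v) \<Rightarrow> 'v set set" where
  "pseudoedges I V rt par = {{rt i, rt j} | i j. adjacent I V rt par i j}"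

definition pseudomatching :: "'i set \<Rightarrow> ('i \<Rightarrow> 'v set) \<Rightarrow> ('i \<Rightarrow> 'v) \<Rightarrow> ('i \<Rightarrow> 'v \<Rightarrow> 'v) \<Rightarrow> 'v set set \<Rightarrow> bool" where
  "pseudomatching I V rt par M \<longleftrightarrow> M \<subseteq> pseudoedges I V rt par \<and>
     (\<forall>e \<in> M. \<forall>e' \<in> M. e \<noteq> e' \<longrightarrow> e \<inter> e' = {})"

definition phiH :: "'i set \<Rightarrow> ('i \<Rightarrow> 'v set) \<Rightarrow> ('i \<Rightarrow> 'v) \<Rightarrow> ('i \<Rightarrow> 'v \<Rightarrow> 'v) \<Rightarrow> 'v set set" where
  "phiH I V rt par = {full_path V rt par i j | i j. adjacent I V rt par i j}"

definition CNFs :: "'i set \<Rightarrow> ('i \<Rightarrow> 'v set) \<Rightarrow> ('i \<Rightarrow> 'v) \<Rightarrow> ('i \<Rightarrow> 'v \<Rightarrow> 'v) \<Rightarrow> 'v set set \<Rightarrow> 'v set set set" where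
  "CNFs I V rt par M = {\<phi>. \<exists>f. \<phi> = f ` M \<and>
     (\<forall>e \<in> M. \<exists>i j. adjacent I V rt par i j \<and> e = {rt i, rt j} \<and>
        (f e = half_path V rt par i j \<or> f e = half_path V rt par j i))}"

definition falsifies :: "('v \<rightharpoonup> bool) \<Rightarrow> 'v set \<Rightarrow> bool" where
  "falsifies S C \<longleftrightarrow> (\<forall>v \<in> C. S v = Some False)"

definition satisfies_clause :: "('v \<rightharpoonup> bool) \<Rightarrow> 'v set \<Rightarrow> bool" where
  "satisfies_clause S C \<longleftrightarrow> (\<exists>v \<in> C. S v = Some True)"

definition satisfies_cnf :: "('v \<rightharpoonup> bool) \<Rightarrow> 'v set set \<Rightarrow> bool" where
  "satisfies_cnf S \<phi> \<longleftrightarrow> (\<forall>C \<in> \<phi>. satisfies_clause S C)"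

definition respects_pe :: "'i set \<Rightarrow> ('i \<Rightarrow> 'v set) \<Rightarrow> ('i \<Rightarrow> 'v) \<Rightarrow> ('i \<Rightarrow> 'v \<Rightarrow> 'v) \<Rightarrow> ('v \<rightharpoonup> bool) \<Rightarrow> 'i \<Rightarrow> 'i \<Rightarrow> bool" where
  "respects_pe I V rt par S i j \<longleftrightarrow>
     (\<forall>v \<in> full_path V rt par i j. \<not> is_root_vertex I rt v \<longrightarrow> S v = Some False) \<and>
     (\<forall>v \<in> full_path V rt par i j. is_internal I V rt par v \<longrightarrow>
        (\<forall>w. siblings I V rt par v w \<longrightarrow> S w = Some True))"

definition comfortable1 :: "'i set \<Rightarrow> ('i \<Rightarrow> 'v set) \<Rightarrow> ('i \<Rightarrow> 'v) \<Rightarrow> ('i \<Rightarrow> 'v \<Rightarrow> 'v) \<Rightarrow> ('v \<rightharpoonup> bool) \<Rightarrow> 'v set set \<Rightarrow> bool" where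
  "comfortable1 I V rt par S M \<longleftrightarrow>
     (\<forall>C \<in> phiH I V rt par. \<not> falsifies S C) \<and>
     (\<forall>e \<in> M. \<forall>i j. adjacent I V rt par i j \<and> e = {rt i, rt j} \<longrightarrow> respects_pe I V rt par S i j)"

definition SAT :: "'i set \<Rightarrow> ('i \<Rightarrow> 'v set) \<Rightarrow> ('i \<Rightarrow> 'v) \<Rightarrow> ('i \<Rightarrow> 'v \<Rightarrow> 'v) \<Rightarrow> ('v \<rightharpoonup> bool) set" where
  "SAT I V rt par = {S'. dom S' = VH I V \<and> satisfies_cnf S' (phiH I V rt par)}"

definition Fix :: "'i set \<Rightarrow> ('i \<Rightarrow> 'v set) \<Rightarrow> ('i \<Rightarrow> 'v) \<Rightarrow> ('i \<Rightarrow> 'v \<Rightarrow> 'v) \<Rightarrow> ('v \<rightharpoonup> bool) \<Rightarrow> 'v set" where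
  "Fix I V rt par S' = {l. \<exists>i j. adjacent I V rt par i j \<and> l = common_leaf V rt par i j \<and>
      S' l = Some True \<and> (\<forall>v \<in> full_path V rt par i j - {l}. S' v = Some False)}"

definition weight :: "'i set \<Rightarrow> ('i \<Rightarrow> 'v set) \<Rightarrow> ('i \<Rightarrow> 'v) \<Rightarrow> ('i \<Rightarrow> 'v \<Rightarrow> 'v) \<Rightarrow> ('v \<rightharpoonup> bool) \<Rightarrow> real" where
  "weight I V rt par S' = (1/2) ^ card (VH I V - Fix I V rt par S')"

definition EC :: "'i set \<Rightarrow> ('i \<Rightarrow> 'v set) \<Rightarrow> ('i \<Rightarrow> 'v) \<Rightarrow> ('i \<Rightarrow> 'v \<Rightarrow> 'v) \<Rightarrow> ('v \<rightharpoonup> bool) \<Rightarrow> ('v \<rightharpoonup> bool) set" where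
  "EC I V rt par S = {S' \<in> SAT I V rt par. S \<subseteq>\<^sub>m S'}"

definition ES :: "'i set \<Rightarrow> ('i \<Rightarrow> 'v set) \<Rightarrow> ('i \<Rightarrow> 'v) \<Rightarrow> ('i \<Rightarrow> 'v \<Rightarrow> 'v) \<Rightarrow> 'v set set \<Rightarrow> ('v \<rightharpoonup> bool) set" where
  "ES I V rt par \<phi> = {S' \<in> SAT I V rt par. satisfies_cnf S' \<phi>}"

definition Pr :: "'i set \<Rightarrow> ('i \<Rightarrow> 'v set) \<Rightarrow> ('i \<Rightarrow> 'v) \<Rightarrow> ('i \<Rightarrow> 'v \<Rightarrow> 'v) \<Rightarrow> ('v \<rightharpoonup> bool) set \<Rightarrow> real" where
  "Pr I V rt par A = (\<Sum>S' \<in> A. weight I V rt par S') / (\<Sum>S' \<in> SAT I V rt par. weight I V rt par S')"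

definition cond_Pr :: "'i set \<Rightarrow> ('i \<Rightarrow> 'v set) \<Rightarrow> ('i \<Rightarrow> 'v) \<Rightarrow> ('i \<Rightarrow> 'v \<Rightarrow> 'v) \<Rightarrow> ('v \<rightharpoonup> bool) set \<Rightarrow> ('v \<rightharpoonup> bool) set \<Rightarrow> real" where
  "cond_Pr I V rt par A B = Pr I V rt par (A \<inter> B) / Pr I V rt par B"

end

theory Submission
  imports Defs "HOL-Library.FuncSet"
begin


lemma rtree_least:
  assumes "rooted_tree Vt r p" "v \<in> Vt"
  shows "(p ^^ (LEAST n. (p^^n) v = r)) v = r"
  using assms unfolding rooted_tree_def by (meson LeastI_ex)

lemma rtree_path_lt:
  assumes T: "rooted_tree Vt r p" and v: "v \<in> Vt" and k: "k < (LEAST n. (p^^n) v = r)"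
  shows "(p^^k) v \<in> Vt - {r}"
  using k
proof (induction k)
  case 0
  then show ?case using v not_less_Least[OF "0.prems"] by simp
next
  case (Suc k)
  then have "(p^^k) v \<in> Vt - {r}" by simp
  then have "(p^^Suc k) v \<in> Vt" using T unfolding rooted_tree_def by simp
  moreover have "(p^^Suc k) v \<noteq> r" using not_less_Least[OF Suc.prems] .
  ultimately show ?case by simp
qed

lemma rtree_path_le:
  assumes T: "rooted_tree Vt r p" and v: "v \<in> Vt" and k: "k \<le> (LEAST n. (p^^n) v = r)"
  shows "(p^^k) v \<in> Vt"
proof (cases "k < (LEAST n. (p^^n) v = r)")
  case True then show ?thesis using rtree_path_lt[OF T v] by blast
next
  case False then have "k = (LEAST n. (p^^n) v = r)" using k by simp
  then show ?thesis using rtree_least[OF T v] T unfolding rooted_tree_def by simp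
qed

lemma count_PiE:
  fixes M :: "'v set set" and Q :: "'v set \<Rightarrow> 'v set \<Rightarrow> bool"
  assumes fin: "finite M" and disj: "\<forall>e\<in>M. \<forall>e'\<in>M. e \<noteq> e' \<longrightarrow> e \<inter> e' = {}"
  shows "card {T. T \<subseteq> \<Union>M \<and> (\<forall>e\<in>M. Q e (T \<inter> e))} = (\<Prod>e\<in>M. card {U. U \<subseteq> e \<and> Q e U})"
proof -
  let ?P = "PiE M (\<lambda>e. {U. U \<subseteq> e \<and> Q e U})"
  let ?g = "\<lambda>h. \<Union>(h ` M)"
  have inj: "inj_on ?g ?P"
  proof (rule inj_onI)
    fix h h' assume h: "h \<in> ?P" and h': "h' \<in> ?P" and eq: "?g h = ?g h'"
    have "h e = h' e" for e
    proof (cases "e \<in> M")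
      case True
      have "h e = ?g h \<inter> e"
      proof
        show "h e \<subseteq> ?g h \<inter> e" using h True by auto
        show "?g h \<inter> e \<subseteq> h e"
        proof
          fix x assume "x \<in> ?g h \<inter> e"
          then obtain e' where e': "e' \<in> M" "x \<in> h e'" "x \<in> e" by auto
          then have "x \<in> e'" using h by auto
          then have "e' = e" using disj e' True by blast
          then show "x \<in> h e" using e' by simp
        qed
      qed
      moreover have "h' e = ?g h' \<inter> e"
      proof
        show "h' e \<subseteq> ?g h' \<inter> e" using h' True by auto
        show "?g h' \<inter> e \<subseteq> h' e"
        proof
          fix x assume "x \<in> ?g h' \<inter> e"
          then obtain e' where e': "e' \<in> M" "x \<in> h' e'" "x \<in> e" by auto
          then have "x \<in> e'" using h' by auto
          then have "e' = e" using disj e' True by blast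
          then show "x \<in> h' e" using e' by simp
        qed
      qed
      ultimately show ?thesis using eq by simp
    next
      case False
      then show ?thesis using h h' by (simp add: PiE_def extensional_def)
    qed
    then show "h = h'" by auto
  qed
  have img: "?g ` ?P = {T. T \<subseteq> \<Union>M \<and> (\<forall>e\<in>M. Q e (T \<inter> e))}"
  proof
    show "?g ` ?P \<subseteq> {T. T \<subseteq> \<Union>M \<and> (\<forall>e\<in>M. Q e (T \<inter> e))}"
    proof
      fix T assume "T \<in> ?g ` ?P"
      then obtain h where h: "h \<in> ?P" and T: "T = ?g h" by auto
      have "T \<inter> e = h e" if e: "e \<in> M" for e
      proof
        show "h e \<subseteq> T \<inter> e" using h e T by auto
        show "T \<inter> e \<subseteq> h e"
        proof
          fix x assume "x \<in> T \<inter> e"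
          then obtain e' where e': "e' \<in> M" "x \<in> h e'" "x \<in> e" using T by auto
          then have "x \<in> e'" using h by auto
          then have "e' = e" using disj e' e by blast
          then show "x \<in> h e" using e' by simp
        qed
      qed
      moreover have "T \<subseteq> \<Union>M" using h T by auto
      ultimately show "T \<in> {T. T \<subseteq> \<Union>M \<and> (\<forall>e\<in>M. Q e (T \<inter> e))}" using h by auto
    qed
    show "{T. T \<subseteq> \<Union>M \<and> (\<forall>e\<in>M. Q e (T \<inter> e))} \<subseteq> ?g ` ?P"
    proof
      fix T assume T: "T \<in> {T. T \<subseteq> \<Union>M \<and> (\<forall>e\<in>M. Q e (T \<inter> e))}"
      let ?h = "restrict (\<lambda>e. T \<inter> e) M"
      have hP: "?h \<in> ?P" using T by auto
      have gh: "?g ?h = T"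
      proof
        show "?g ?h \<subseteq> T" by auto
        show "T \<subseteq> ?g ?h"
        proof
          fix x assume x: "x \<in> T"
          then obtain e where e: "e \<in> M" "x \<in> e" using T by blast
          then have "x \<in> ?h e" using x by simp
          then show "x \<in> ?g ?h" using e(1) by blast
        qed
      qed
      show "T \<in> ?g ` ?P" by (rule image_eqI[where f="?g", OF gh[symmetric] hP])
    qed
  qed
  have "card {T. T \<subseteq> \<Union>M \<and> (\<forall>e\<in>M. Q e (T \<inter> e))} = card (?g ` ?P)"
    by (simp only: img)
  also have "\<dots> = card ?P" by (rule card_image[OF inj])
  also have "\<dots> = (\<Prod>e\<in>M. card {U. U \<subseteq> e \<and> Q e U})" using card_PiE[OF fin] .
  finally show ?thesis .
qed

lemma card3: "a \<noteq> b \<Longrightarrow> card {U. U \<subseteq> {a,b} \<and> U \<noteq> {}} = 3"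
proof -
  assume ab: "a \<noteq> b"
  have "{U. U \<subseteq> {a,b} \<and> U \<noteq> {}} = Pow {a,b} - {{}}" by blast
  moreover have "card (Pow {a,b}) = 4" using ab by (simp add: card_Pow)
  ultimately show ?thesis by (simp add: card_Diff_singleton)
qed

lemma card2: "a \<noteq> b \<Longrightarrow> card {U. U \<subseteq> {a,b} \<and> a \<in> U} = 2"
proof -
  assume ab: "a \<noteq> b"
  have "{U. U \<subseteq> {a,b} \<and> a \<in> U} = {{a},{a,b}}" by blast
  then show ?thesis using ab by (simp add: doubleton_eq_iff)
qed



locale bt =
  fixes I :: "'i set" and V :: "'i \<Rightarrow> 'v set" and rt :: "'i \<Rightarrow> 'v" and par :: "'i \<Rightarrow> 'v \<Rightarrow> 'v"
  assumes B: "btbg I V rt par"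
begin

lemma finI: "finite I" using B unfolding btbg_def by simp
lemma tree: "i \<in> I \<Longrightarrow> rooted_tree (V i) (rt i) (par i)" using B unfolding btbg_def by simp
lemma ext: "i \<in> I \<Longrightarrow> extended V rt par i" using B unfolding btbg_def by simp
lemma finV: "i \<in> I \<Longrightarrow> finite (V i)" using tree unfolding rooted_tree_def by simp
lemma finVH: "finite (VH I V)" unfolding VH_def using finI finV by simp
lemma shared: "i \<in> I \<Longrightarrow> j \<in> I \<Longrightarrow> i \<noteq> j \<Longrightarrow> v \<in> V i \<Longrightarrow> v \<in> V j \<Longrightarrow>
   is_leaf V rt par i v \<and> is_leaf V rt par j v"
  using B unfolding btbg_def by blast
lemma shared_eq: "i \<in> I \<Longrightarrow> j \<in> I \<Longrightarrow> i \<noteq> j \<Longrightarrow> v \<in> V i \<Longrightarrow> v \<in> V j \<Longrightarrow> w \<in> V i \<Longrightarrow> w \<in> V j \<Longrightarrow> v = w"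
  using B unfolding btbg_def by blast
lemma leaf_card: "i \<in> I \<Longrightarrow> is_leaf V rt par i v \<Longrightarrow> card {j \<in> I. is_leaf V rt par j v} = 2"
  using B unfolding btbg_def by blast
lemma rt_in: "i \<in> I \<Longrightarrow> rt i \<in> V i" using tree unfolding rooted_tree_def by simp
lemma rt_unique: "i \<in> I \<Longrightarrow> j \<in> I \<Longrightarrow> rt i \<in> V j \<Longrightarrow> i = j"
  using shared[of i j "rt i"] rt_in unfolding is_leaf_def by blast
lemma adj_sym: "adjacent I V rt par i j \<Longrightarrow> adjacent I V rt par j i"
  unfolding adjacent_def by blast
lemma adjI: "adjacent I V rt par i j \<Longrightarrow> i \<in> I \<and> j \<in> I \<and> i \<noteq> j"
  unfolding adjacent_def by blast

lemma cl: assumes a: "adjacent I V rt par i j"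
  shows "is_leaf V rt par i (common_leaf V rt par i j) \<and> is_leaf V rt par j (common_leaf V rt par i j)"
proof -
  obtain l where l: "is_leaf V rt par i l" "is_leaf V rt par j l" using a unfolding adjacent_def by blast
  have u: "l' = l" if "is_leaf V rt par i l' \<and> is_leaf V rt par j l'" for l'
    using shared_eq[of i j l' l] that l adjI[OF a] unfolding is_leaf_def by blast
  show ?thesis unfolding common_leaf_def
    by (rule theI[of "\<lambda>l. is_leaf V rt par i l \<and> is_leaf V rt par j l" l]) (use l u in blast)+
qed

lemma cl_sym: "common_leaf V rt par i j = common_leaf V rt par j i"
  unfolding common_leaf_def by (simp add: conj_commute)

lemma fp_sym: "full_path V rt par i j = full_path V rt par j i"
  unfolding full_path_def by blast

lemma hp_sub: assumes a: "adjacent I V rt par i j" shows "half_path V rt par i j \<subseteq> V i"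
proof -
  have iI: "i \<in> I" using adjI[OF a] by simp
  have lV: "common_leaf V rt par i j \<in> V i" using cl[OF a] unfolding is_leaf_def by simp
  show ?thesis unfolding half_path_def path_to_root_def
    using rtree_path_le[OF tree[OF iI] lV] by blast
qed

lemma rt_hp: assumes a: "adjacent I V rt par i j" shows "rt i \<in> half_path V rt par i j"
proof -
  have iI: "i \<in> I" using adjI[OF a] by simp
  have lV: "common_leaf V rt par i j \<in> V i" using cl[OF a] unfolding is_leaf_def by simp
  show ?thesis unfolding half_path_def path_to_root_def
    using rtree_least[OF tree[OF iI] lV] by (metis (mono_tags, lifting) mem_Collect_eq order_refl)
qed

lemma cl_hp: assumes a: "adjacent I V rt par i j" shows "common_leaf V rt par i j \<in> half_path V rt par i j"
  unfolding half_path_def path_to_root_def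
  by (metis (mono_tags, lifting) funpow_0 le0 mem_Collect_eq)

lemma fp_sub: assumes a: "adjacent I V rt par i j" shows "full_path V rt par i j \<subseteq> V i \<union> V j"
  unfolding full_path_def using hp_sub[OF a] hp_sub[OF adj_sym[OF a]] by blast

lemma fp_VH: assumes a: "adjacent I V rt par i j" shows "full_path V rt par i j \<subseteq> VH I V"
  using fp_sub[OF a] adjI[OF a] unfolding VH_def by blast

lemma root_in_fp: assumes a: "adjacent I V rt par c d" and m: "m \<in> I" and r: "rt m \<in> full_path V rt par c d"
  shows "m = c \<or> m = d"
  using fp_sub[OF a] r rt_unique[OF m] adjI[OF a] by blast

lemma internal: assumes i: "i \<in> I" and v: "v \<in> V i" "v \<noteq> rt i" and nl: "\<not> is_leaf V rt par i v"
  shows "is_internal I V rt par v"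
proof -
  have "v \<in> VH I V" using i v unfolding VH_def by blast
  moreover have "\<not> is_root_vertex I rt v"
  proof
    assume "is_root_vertex I rt v"
    then obtain m where m: "m \<in> I" "v = rt m" unfolding is_root_vertex_def by blast
    then have "m = i" using rt_unique[OF m(1) i] v by simp
    then show False using m v by simp
  qed
  moreover have "\<not> is_leaf_vertex I V rt par v"
  proof
    assume "is_leaf_vertex I V rt par v"
    then obtain m where m: "m \<in> I" "is_leaf V rt par m v" unfolding is_leaf_vertex_def by blast
    show False
    proof (cases "m = i")
      case True then show False using m nl by simp
    next
      case False
      then show False using shared[OF i m(1) _ v(1)] m nl unfolding is_leaf_def by blast
    qed
  qed
  ultimately show ?thesis unfolding is_internal_def by simp
qed

lemma leaf_not_root: assumes i: "i \<in> I" and l: "is_leaf V rt par i v" shows "\<not> is_root_vertex I rt v"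
proof
  assume "is_root_vertex I rt v"
  then obtain m where m: "m \<in> I" "v = rt m" unfolding is_root_vertex_def by blast
  then have "m = i" using rt_unique[OF m(1) i] l unfolding is_leaf_def by simp
  then show False using m l unfolding is_leaf_def by simp
qed

end


locale btS = bt I V rt par
  for I :: "'i set" and V :: "'i \<Rightarrow> 'v set" and rt :: "'i \<Rightarrow> 'v" and par :: "'i \<Rightarrow> 'v \<Rightarrow> 'v" +
  fixes M :: "'v set set" and S :: "'v \<rightharpoonup> bool"
  assumes pm: "pseudomatching I V rt par M"
    and domS: "dom S = VH I V - \<Union>M"
    and comf: "comfortable1 I V rt par S M"
begin

lemma M_form: "e \<in> M \<Longrightarrow> \<exists>i j. adjacent I V rt par i j \<and> e = {rt i, rt j}"
  using pm unfolding pseudomatching_def pseudoedges_def by blast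

lemma resp: "e \<in> M \<Longrightarrow> adjacent I V rt par i j \<Longrightarrow> e = {rt i, rt j} \<Longrightarrow> respects_pe I V rt par S i j"
  using comf unfolding comfortable1_def by blast

lemma nonroot_false: "e \<in> M \<Longrightarrow> adjacent I V rt par i j \<Longrightarrow> e = {rt i, rt j} \<Longrightarrow>
   v \<in> full_path V rt par i j \<Longrightarrow> \<not> is_root_vertex I rt v \<Longrightarrow> S v = Some False"
  using resp unfolding respects_pe_def by blast

lemma partner: assumes e: "e \<in> M" and c: "c \<in> I" and r: "rt c \<in> e"
  shows "\<exists>b. adjacent I V rt par c b \<and> e = {rt c, rt b}"
proof -
  obtain i j where a: "adjacent I V rt par i j" and ee: "e = {rt i, rt j}" using M_form[OF e] by blast
  have ij: "i \<in> I" "j \<in> I" using adjI[OF a] by auto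
  show ?thesis
  proof (cases "rt c = rt i")
    case True
    then have "c = i" using rt_unique[OF c ij(1)] rt_in[OF ij(1)] by simp
    then show ?thesis using a ee by blast
  next
    case False
    then have "rt c = rt j" using r ee by auto
    then have "c = j" using rt_unique[OF c ij(2)] rt_in[OF ij(2)] by simp
    then show ?thesis using adj_sym[OF a] ee by blast
  qed
qed

lemma key:
  assumes e: "e \<in> M" and cb: "adjacent I V rt par c b" and eq: "e = {rt c, rt b}"
    and cd: "adjacent I V rt par c d" and db: "d \<noteq> b"
  shows "\<exists>w \<in> half_path V rt par c d. w \<noteq> common_leaf V rt par c d \<and> S w = Some True"
proof -
  define l1 where "l1 = common_leaf V rt par c b"
  define l2 where "l2 = common_leaf V rt par c d"
  define p where "p = par c"
  define n1 where "n1 = (LEAST n. (p^^n) l1 = rt c)"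
  define n2 where "n2 = (LEAST n. (p^^n) l2 = rt c)"
  have cI: "c \<in> I" and bI: "b \<in> I" and dI: "d \<in> I" and cb': "c \<noteq> b" and cd': "c \<noteq> d"
    using adjI[OF cb] adjI[OF cd] by auto
  have T: "rooted_tree (V c) (rt c) p" using tree[OF cI] p_def by simp
  have l1c: "is_leaf V rt par c l1" and l1b: "is_leaf V rt par b l1" using cl[OF cb] l1_def by auto
  have l2c: "is_leaf V rt par c l2" and l2d: "is_leaf V rt par d l2" using cl[OF cd] l2_def by auto
  have l1V: "l1 \<in> V c" and l2V: "l2 \<in> V c" using l1c l2c unfolding is_leaf_def by auto
  have A1: "half_path V rt par c b = {(p^^k) l1 | k. k \<le> n1}"
    unfolding half_path_def path_to_root_def l1_def n1_def p_def by simp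
  have A2: "half_path V rt par c d = {(p^^k) l2 | k. k \<le> n2}"
    unfolding half_path_def path_to_root_def l2_def n2_def p_def by simp
  have ne: "l1 \<noteq> l2"
  proof
    assume "l1 = l2"
    then have "{c, b, d} \<subseteq> {j \<in> I. is_leaf V rt par j l1}" using l1c l1b l2d cI bI dI by auto
    moreover have "finite {j \<in> I. is_leaf V rt par j l1}" using finI by simp
    ultimately have "card {c, b, d} \<le> 2" using leaf_card[OF cI l1c] card_mono by metis
    then show False using cb' cd' db by simp
  qed
  have noleaf: "k = 0" if y: "is_leaf V rt par c y" and yk: "y = (p^^k) l1" and k: "k \<le> n1" for y k
  proof (rule ccontr)
    assume "k \<noteq> 0"
    then obtain k' where k': "k = Suc k'" by (cases k) auto
    have "(p^^k') l1 \<in> V c - {rt c}" using rtree_path_lt[OF T l1V] k k' n1_def by simp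
    moreover have "p ((p^^k') l1) = y" using yk k' by simp
    ultimately have "(p^^k') l1 \<in> children V rt par c y" unfolding children_def p_def by simp
    then show False using y unfolding is_leaf_def by simp
  qed
  define Q where "Q = {m. m \<le> n2 \<and> (\<forall>k\<le>n1. (p^^m) l2 \<noteq> (p^^k) l1)}"
  have Q0: "0 \<in> Q" unfolding Q_def using noleaf[OF l2c] ne by force
  have finQ: "finite Q" unfolding Q_def by simp
  define m where "m = Max Q"
  have mQ: "m \<in> Q" using Max_in[OF finQ] Q0 m_def by blast
  have rtc1: "(p^^n1) l1 = rt c" using rtree_least[OF T l1V] n1_def by simp
  have rtc2: "(p^^n2) l2 = rt c" using rtree_least[OF T l2V] n2_def by simp
  have mlt: "m < n2"
  proof -
    have "m \<le> n2" using mQ Q_def by simp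
    moreover have "m \<noteq> n2" using mQ rtc1 rtc2 unfolding Q_def by force
    ultimately show ?thesis by simp
  qed
  have "Suc m \<notin> Q" using Max_ge[OF finQ] m_def by fastforce
  then obtain k where k: "k \<le> n1" and ak: "(p^^Suc m) l2 = (p^^k) l1" using mlt unfolding Q_def by auto
  define w where "w = (p^^m) l2"
  have wV: "w \<in> V c - {rt c}" using rtree_path_lt[OF T l2V] mlt n2_def w_def by simp
  have k0: "k \<noteq> 0"
  proof
    assume "k = 0"
    then have "p w = l1" using ak w_def by simp
    then have "w \<in> children V rt par c l1" using wV unfolding children_def p_def by simp
    then show False using l1c unfolding is_leaf_def by simp
  qed
  then obtain k' where k': "k = Suc k'" by (cases k) auto
  define x where "x = (p^^k') l1"
  have xV: "x \<in> V c - {rt c}" using rtree_path_lt[OF T l1V] k k' n1_def x_def by simp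
  have pxw: "p x = p w" using ak k' x_def w_def by simp
  have xw: "x \<noteq> w"
  proof
    assume "x = w"
    moreover have "k' \<le> n1" using k k' by simp
    moreover have "(p^^m) l2 \<noteq> (p^^k') l1" using mQ \<open>k' \<le> n1\<close> unfolding Q_def by blast
    ultimately show False unfolding x_def w_def by simp
  qed
  have xch: "x \<in> children V rt par c (p x)" and wch: "w \<in> children V rt par c (p x)"
    using xV wV pxw unfolding children_def p_def by auto
  have xnl: "\<not> is_leaf V rt par c x"
  proof
    assume "is_leaf V rt par c x"
    then have "children V rt par c (par c x) = {x}" using ext[OF cI] unfolding extended_def by blast
    then show False using wch xw p_def by auto
  qed
  have wnl: "\<not> is_leaf V rt par c w"
  proof
    assume "is_leaf V rt par c w"
    then have "children V rt par c (par c w) = {w}" using ext[OF cI] unfolding extended_def by blast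
    then show False using xch xw pxw p_def by auto
  qed
  have xi: "is_internal I V rt par x" using internal[OF cI _ _ xnl] xV by simp
  have wi: "is_internal I V rt par w" using internal[OF cI _ _ wnl] wV by simp
  have sib: "siblings I V rt par x w" unfolding siblings_def using xi wi xw cI xV wV pxw p_def by blast
  have xfp: "x \<in> full_path V rt par c b" unfolding full_path_def A1 x_def using k k' by auto
  have "S w = Some True" using resp[OF e cb eq] xfp xi sib unfolding respects_pe_def by blast
  moreover have "w \<in> half_path V rt par c d" unfolding A2 w_def using mlt by auto
  moreover have "w \<noteq> common_leaf V rt par c d" using wnl l2c l2_def by auto
  ultimately show ?thesis by blast
qed

end


context btS begin

lemma D_root: "v \<in> \<Union>M \<Longrightarrow> \<exists>e\<in>M. \<exists>m\<in>I. v = rt m \<and> v \<in> e"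
proof -
  assume "v \<in> \<Union>M"
  then obtain e where e: "e \<in> M" "v \<in> e" by blast
  then obtain i j where a: "adjacent I V rt par i j" and ee: "e = {rt i, rt j}" using M_form by blast
  then show ?thesis using e adjI[OF a] by blast
qed

lemma D_sub: "\<Union>M \<subseteq> VH I V"
  using D_root rt_in unfolding VH_def by blast

lemma map_le_eq: "S \<subseteq>\<^sub>m S' \<Longrightarrow> v \<in> dom S \<Longrightarrow> S' v = S v"
  unfolding map_le_def by auto

lemma aux_stable:
  assumes a: "adjacent I V rt par c d" and e: "e \<in> M" and r: "rt c \<in> e"
  shows "(\<exists>v \<in> full_path V rt par c d - {common_leaf V rt par c d}. S v = Some True)
         \<or> S (common_leaf V rt par c d) = Some False"
proof -
  have cI: "c \<in> I" using adjI[OF a] by simp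
  obtain b where cb: "adjacent I V rt par c b" and eq: "e = {rt c, rt b}" using partner[OF e cI r] by blast
  show ?thesis
  proof (cases "d = b")
    case True
    have "common_leaf V rt par c d \<in> full_path V rt par c d" using cl_hp[OF a] unfolding full_path_def by blast
    moreover have "\<not> is_root_vertex I rt (common_leaf V rt par c d)" using leaf_not_root[OF cI] cl[OF a] by blast
    ultimately have "S (common_leaf V rt par c d) = Some False"
      using nonroot_false[OF e cb eq] True by blast
    then show ?thesis by blast
  next
    case False
    then obtain w where "w \<in> half_path V rt par c d" "w \<noteq> common_leaf V rt par c d" "S w = Some True"
      using key[OF e cb eq a] by blast
    then show ?thesis unfolding full_path_def by blast
  qed
qed

lemma stable:
  assumes a: "adjacent I V rt par c d"
  shows "full_path V rt par c d \<subseteq> dom S \<or>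
         (\<exists>v \<in> full_path V rt par c d - {common_leaf V rt par c d}. S v = Some True)
         \<or> S (common_leaf V rt par c d) = Some False"
proof (cases "full_path V rt par c d \<subseteq> dom S")
  case True then show ?thesis by blast
next
  case False
  then obtain v where v: "v \<in> full_path V rt par c d" "v \<notin> dom S" by blast
  then have "v \<in> \<Union>M" using fp_VH[OF a] domS by blast
  then obtain e m where e: "e \<in> M" and m: "m \<in> I" "v = rt m" "v \<in> e" using D_root by blast
  have "m = c \<or> m = d" using root_in_fp[OF a m(1)] v m by simp
  then show ?thesis
  proof
    assume "m = c" then show ?thesis using aux_stable[OF a e] m by simp
  next
    assume "m = d" then show ?thesis using aux_stable[OF adj_sym[OF a] e] m fp_sym cl_sym by metis
  qed
qed

lemma Fix_eq: assumes le: "S \<subseteq>\<^sub>m S'" shows "Fix I V rt par S' = Fix I V rt par S"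
proof -
  have eqv: "(S' (common_leaf V rt par c d) = Some True \<and> (\<forall>v \<in> full_path V rt par c d - {common_leaf V rt par c d}. S' v = Some False))
    \<longleftrightarrow> (S (common_leaf V rt par c d) = Some True \<and> (\<forall>v \<in> full_path V rt par c d - {common_leaf V rt par c d}. S v = Some False))"
    if a: "adjacent I V rt par c d" for c d
  proof -
    have clfp: "common_leaf V rt par c d \<in> full_path V rt par c d" using cl_hp[OF a] unfolding full_path_def by blast
    from stable[OF a] show ?thesis
    proof (elim disjE)
      assume sub: "full_path V rt par c d \<subseteq> dom S"
      then have "\<forall>v \<in> full_path V rt par c d. S' v = S v" using map_le_eq[OF le] by blast
      then show ?thesis using clfp by auto
    next
      assume "\<exists>v \<in> full_path V rt par c d - {common_leaf V rt par c d}. S v = Some True"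
      then obtain v where v: "v \<in> full_path V rt par c d - {common_leaf V rt par c d}" "S v = Some True" by blast
      then have "S' v = Some True" using map_le_eq[OF le] by (metis domI)
      then show ?thesis using v by fastforce
    next
      assume f: "S (common_leaf V rt par c d) = Some False"
      then have "S' (common_leaf V rt par c d) = Some False" using map_le_eq[OF le] by (metis domI)
      then show ?thesis using f by simp
    qed
  qed
  show ?thesis unfolding Fix_def
  proof (intro Collect_cong iffI)
    fix l assume "\<exists>i j. adjacent I V rt par i j \<and> l = common_leaf V rt par i j \<and> S' l = Some True \<and>
         (\<forall>v\<in>full_path V rt par i j - {l}. S' v = Some False)"
    then obtain i j where "adjacent I V rt par i j" "l = common_leaf V rt par i j" "S' l = Some True"
         "\<forall>v\<in>full_path V rt par i j - {l}. S' v = Some False" by blast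
    then show "\<exists>i j. adjacent I V rt par i j \<and> l = common_leaf V rt par i j \<and> S l = Some True \<and>
         (\<forall>v\<in>full_path V rt par i j - {l}. S v = Some False)" using eqv by blast
  next
    fix l assume "\<exists>i j. adjacent I V rt par i j \<and> l = common_leaf V rt par i j \<and> S l = Some True \<and>
         (\<forall>v\<in>full_path V rt par i j - {l}. S v = Some False)"
    then obtain i j where "adjacent I V rt par i j" "l = common_leaf V rt par i j" "S l = Some True"
         "\<forall>v\<in>full_path V rt par i j - {l}. S v = Some False" by blast
    then show "\<exists>i j. adjacent I V rt par i j \<and> l = common_leaf V rt par i j \<and> S' l = Some True \<and>
         (\<forall>v\<in>full_path V rt par i j - {l}. S' v = Some False)" using eqv by blast
  qed
qed

lemma aux_sat:
  assumes a: "adjacent I V rt par c d" and e: "e \<in> M" and r: "rt c \<in> e" and le: "S \<subseteq>\<^sub>m S'"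
    and all: "\<forall>e\<in>M. \<exists>v\<in>e. S' v = Some True"
  shows "\<exists>v \<in> full_path V rt par c d. S' v = Some True"
proof -
  have cI: "c \<in> I" using adjI[OF a] by simp
  obtain b where cb: "adjacent I V rt par c b" and eq: "e = {rt c, rt b}" using partner[OF e cI r] by blast
  show ?thesis
  proof (cases "d = b")
    case True
    obtain v where v: "v \<in> e" "S' v = Some True" using all e by blast
    have "e \<subseteq> full_path V rt par c d" using eq True rt_hp[OF a] rt_hp[OF adj_sym[OF a]]
      unfolding full_path_def by blast
    then show ?thesis using v by blast
  next
    case False
    then obtain w where "w \<in> half_path V rt par c d" "S w = Some True"
      using key[OF e cb eq a] by blast
    moreover then have "S' w = Some True" using map_le_eq[OF le] by (metis domI)
    ultimately show ?thesis unfolding full_path_def by blast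
  qed
qed

lemma sat_char:
  assumes le: "S \<subseteq>\<^sub>m S'" and dS': "dom S' = VH I V"
  shows "satisfies_cnf S' (phiH I V rt par) \<longleftrightarrow> (\<forall>e\<in>M. \<exists>v\<in>e. S' v = Some True)"
proof
  assume sat: "satisfies_cnf S' (phiH I V rt par)"
  show "\<forall>e\<in>M. \<exists>v\<in>e. S' v = Some True"
  proof
    fix e assume e: "e \<in> M"
    then obtain i j where a: "adjacent I V rt par i j" and ee: "e = {rt i, rt j}" using M_form by blast
    have "full_path V rt par i j \<in> phiH I V rt par" unfolding phiH_def using a by blast
    then obtain v where v: "v \<in> full_path V rt par i j" "S' v = Some True"
      using sat unfolding satisfies_cnf_def satisfies_clause_def by blast
    have "is_root_vertex I rt v"
    proof (rule ccontr)
      assume "\<not> is_root_vertex I rt v"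
      then have "S v = Some False" using nonroot_false[OF e a ee v(1)] by simp
      then have "S' v = Some False" using map_le_eq[OF le] by (metis domI)
      then show False using v by simp
    qed
    then obtain m where m: "m \<in> I" "v = rt m" unfolding is_root_vertex_def by blast
    then have "m = i \<or> m = j" using root_in_fp[OF a m(1)] v by simp
    then show "\<exists>v\<in>e. S' v = Some True" using v m ee by blast
  qed
next
  assume all: "\<forall>e\<in>M. \<exists>v\<in>e. S' v = Some True"
  show "satisfies_cnf S' (phiH I V rt par)" unfolding satisfies_cnf_def satisfies_clause_def
  proof
    fix C assume "C \<in> phiH I V rt par"
    then obtain c d where a: "adjacent I V rt par c d" and C: "C = full_path V rt par c d"
      unfolding phiH_def by blast
    show "\<exists>v\<in>C. S' v = Some True"
    proof (cases "C \<subseteq> dom S")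
      case True
      have "\<not> falsifies S C" using comf \<open>C \<in> phiH I V rt par\<close> unfolding comfortable1_def by blast
      then obtain v where v: "v \<in> C" "S v \<noteq> Some False" unfolding falsifies_def by blast
      then have "S v = Some True" using True by (cases "S v") auto
      then have "S' v = Some True" using map_le_eq[OF le] by (metis domI)
      then show ?thesis using v by blast
    next
      case False
      then obtain v where v: "v \<in> full_path V rt par c d" "v \<notin> dom S" using C by blast
      then have "v \<in> \<Union>M" using fp_VH[OF a] domS by blast
      then obtain e m where e: "e \<in> M" and m: "m \<in> I" "v = rt m" "v \<in> e" using D_root by blast
      have "m = c \<or> m = d" using root_in_fp[OF a m(1)] v m by simp
      then show ?thesis
      proof
        assume "m = c" then show ?thesis using aux_sat[OF a e _ le all] m C by simp
      next
        assume "m = d" then show ?thesis using aux_sat[OF adj_sym[OF a] e _ le all] m C fp_sym by metis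
      qed
    qed
  qed
qed

lemma hp_clause:
  assumes e: "e \<in> M" and a: "adjacent I V rt par i j" and ee: "e = {rt i, rt j}" and le: "S \<subseteq>\<^sub>m S'"
  shows "satisfies_clause S' (half_path V rt par i j) \<longleftrightarrow> S' (rt i) = Some True"
proof
  assume "satisfies_clause S' (half_path V rt par i j)"
  then obtain v where v: "v \<in> half_path V rt par i j" "S' v = Some True" unfolding satisfies_clause_def by blast
  have vf: "v \<in> full_path V rt par i j" using v unfolding full_path_def by blast
  have "is_root_vertex I rt v"
  proof (rule ccontr)
    assume "\<not> is_root_vertex I rt v"
    then have "S v = Some False" using nonroot_false[OF e a ee vf] by simp
    then have "S' v = Some False" using map_le_eq[OF le] by (metis domI)
    then show False using v by simp
  qed
  then obtain m where m: "m \<in> I" "v = rt m" unfolding is_root_vertex_def by blast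
  then have "m = i" using rt_unique[OF m(1)] hp_sub[OF a] v adjI[OF a] by blast
  then show "S' (rt i) = Some True" using v m by simp
next
  assume "S' (rt i) = Some True"
  then show "satisfies_clause S' (half_path V rt par i j)" using rt_hp[OF a] unfolding satisfies_clause_def by blast
qed

end


context btS begin

lemma finM: "finite M"
proof -
  have "M \<subseteq> (\<lambda>(i,j). {rt i, rt j}) ` (I \<times> I)"
    using M_form adjI by fastforce
  then show ?thesis using finite_subset finI by blast
qed

lemma disjM: "\<forall>e\<in>M. \<forall>e'\<in>M. e \<noteq> e' \<longrightarrow> e \<inter> e' = {}"
  using pm unfolding pseudomatching_def by blast

lemma M_two: "e \<in> M \<Longrightarrow> \<exists>a b. a \<noteq> b \<and> e = {a, b}"
proof -
  assume "e \<in> M"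
  then obtain i j where a: "adjacent I V rt par i j" and ee: "e = {rt i, rt j}" using M_form by blast
  have "rt i \<noteq> rt j" using adjI[OF a] rt_unique rt_in by metis
  then show ?thesis using ee by blast
qed

lemma phi_r:
  assumes ph: "\<phi> \<in> CNFs I V rt par M"
  shows "\<exists>r. (\<forall>e\<in>M. r e \<in> e) \<and> (\<forall>S'. S \<subseteq>\<^sub>m S' \<longrightarrow> (satisfies_cnf S' \<phi> \<longleftrightarrow> (\<forall>e\<in>M. S' (r e) = Some True)))"
proof -
  obtain f where phf: "\<phi> = f ` M" and fp: "\<forall>e \<in> M. \<exists>i j. adjacent I V rt par i j \<and> e = {rt i, rt j} \<and>
        (f e = half_path V rt par i j \<or> f e = half_path V rt par j i)"
    using ph unfolding CNFs_def by blast
  have "\<forall>e\<in>M. \<exists>x. x \<in> e \<and> (\<forall>S'. S \<subseteq>\<^sub>m S' \<longrightarrow> (satisfies_clause S' (f e) \<longleftrightarrow> S' x = Some True))"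
  proof
    fix e assume e: "e \<in> M"
    then obtain i j where a: "adjacent I V rt par i j" and ee: "e = {rt i, rt j}"
      and fe: "f e = half_path V rt par i j \<or> f e = half_path V rt par j i" using fp by blast
    from fe show "\<exists>x. x \<in> e \<and> (\<forall>S'. S \<subseteq>\<^sub>m S' \<longrightarrow> (satisfies_clause S' (f e) \<longleftrightarrow> S' x = Some True))"
    proof
      assume "f e = half_path V rt par i j"
      then show ?thesis using hp_clause[OF e a ee] ee by auto
    next
      assume "f e = half_path V rt par j i"
      moreover have "e = {rt j, rt i}" using ee by blast
      ultimately show ?thesis using hp_clause[OF e adj_sym[OF a]] by auto
    qed
  qed
  then obtain r where r: "\<forall>e\<in>M. r e \<in> e \<and> (\<forall>S'. S \<subseteq>\<^sub>m S' \<longrightarrow> (satisfies_clause S' (f e) \<longleftrightarrow> S' (r e) = Some True))"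
    by metis
  show ?thesis
  proof (intro exI conjI allI impI)
    show "\<forall>e\<in>M. r e \<in> e" using r by blast
    fix S' assume le: "S \<subseteq>\<^sub>m S'"
    show "satisfies_cnf S' \<phi> \<longleftrightarrow> (\<forall>e\<in>M. S' (r e) = Some True)"
      unfolding phf satisfies_cnf_def using r le by auto
  qed
qed

definition ext :: "'v set \<Rightarrow> 'v \<rightharpoonup> bool" where
  "ext T = (\<lambda>v. if v \<in> \<Union>M then Some (v \<in> T) else S v)"

lemma count_ext:
  "card {S'. dom S' = VH I V \<and> S \<subseteq>\<^sub>m S' \<and> P {v \<in> \<Union>M. S' v = Some True}} = card {T. T \<subseteq> \<Union>M \<and> P T}"
proof -
  let ?Y = "{T. T \<subseteq> \<Union>M \<and> P T}"
  let ?X = "{S'. dom S' = VH I V \<and> S \<subseteq>\<^sub>m S' \<and> P {v \<in> \<Union>M. S' v = Some True}}"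
  have inj: "inj_on ext ?Y"
  proof (rule inj_onI)
    fix T T' assume T: "T \<in> ?Y" and T': "T' \<in> ?Y" and eq: "ext T = ext T'"
    have "v \<in> T \<longleftrightarrow> v \<in> T'" if v: "v \<in> \<Union>M" for v
      using fun_cong[OF eq, of v] v unfolding ext_def by simp
    then show "T = T'" using T T' by blast
  qed
  have recov: "{v \<in> \<Union>M. ext T v = Some True} = T" if "T \<subseteq> \<Union>M" for T
    using that unfolding ext_def by auto
  have domE: "dom (ext T) = VH I V" for T
    using domS D_sub unfolding ext_def dom_def by auto
  have leE: "S \<subseteq>\<^sub>m ext T" for T
    unfolding map_le_def ext_def using domS by auto
  have img: "ext ` ?Y = ?X"
  proof
    show "ext ` ?Y \<subseteq> ?X"
    proof
      fix S' assume "S' \<in> ext ` ?Y"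
      then obtain T where T: "T \<in> ?Y" and S': "S' = ext T" by blast
      have "{v \<in> \<Union>M. S' v = Some True} = T" using recov T S' by blast
      then show "S' \<in> ?X" using T S' domE leE by simp
    qed
    show "?X \<subseteq> ext ` ?Y"
    proof
      fix S' assume S': "S' \<in> ?X"
      let ?T = "{v \<in> \<Union>M. S' v = Some True}"
      have "ext ?T = S'"
      proof
        fix v
        show "ext ?T v = S' v"
        proof (cases "v \<in> \<Union>M")
          case True
          then have "v \<in> dom S'" using S' D_sub by auto
          then obtain b where "S' v = Some b" by blast
          then show ?thesis using True unfolding ext_def by auto
        next
          case False
          show ?thesis
          proof (cases "v \<in> VH I V")
            case True
            then have "v \<in> dom S" using domS False by blast
            then show ?thesis using False map_le_eq[of S' v] S' unfolding ext_def by auto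
          next
            case F2: False
            then have "S v = None" "S' v = None" using domS S' by auto
            then show ?thesis using False unfolding ext_def by simp
          qed
        qed
      qed
      moreover have TY: "?T \<in> ?Y" using S' by auto
      ultimately show "S' \<in> ext ` ?Y" by (intro image_eqI[where x="?T"]) simp_all
    qed
  qed
  have "card ?X = card (ext ` ?Y)" by (simp only: img)
  also have "\<dots> = card ?Y" by (rule card_image[OF inj])
  finally show ?thesis .
qed

end


context btS begin

lemma ex_iff: "e \<in> M \<Longrightarrow> (\<exists>v\<in>e. S' v = Some True) \<longleftrightarrow> {v \<in> \<Union>M. S' v = Some True} \<inter> e \<noteq> {}"
  by blast

lemma EC_eq: "EC I V rt par S = {S'. dom S' = VH I V \<and> S \<subseteq>\<^sub>m S' \<and>
    (\<lambda>T. \<forall>e\<in>M. T \<inter> e \<noteq> {}) {v \<in> \<Union>M. S' v = Some True}}"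
proof -
  have "EC I V rt par S = {S'. dom S' = VH I V \<and> S \<subseteq>\<^sub>m S' \<and> (\<forall>e\<in>M. \<exists>v\<in>e. S' v = Some True)}"
    unfolding EC_def SAT_def using sat_char by auto
  also have "\<dots> = {S'. dom S' = VH I V \<and> S \<subseteq>\<^sub>m S' \<and>
    (\<lambda>T. \<forall>e\<in>M. T \<inter> e \<noteq> {}) {v \<in> \<Union>M. S' v = Some True}}"
    using ex_iff by (intro Collect_cong) blast
  finally show ?thesis .
qed

lemma card_EC: "card (EC I V rt par S) = 3 ^ card M"
proof -
  have "card (EC I V rt par S) = card {T. T \<subseteq> \<Union>M \<and> (\<forall>e\<in>M. T \<inter> e \<noteq> {})}"
    unfolding EC_eq by (rule count_ext)
  also have "\<dots> = (\<Prod>e\<in>M. card {U. U \<subseteq> e \<and> U \<noteq> {}})"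
    by (rule count_PiE[OF finM disjM])
  also have "\<dots> = (\<Prod>e\<in>M. 3)"
  proof (rule prod.cong)
    fix e assume "e \<in> M"
    then obtain a b where "a \<noteq> b" "e = {a, b}" using M_two by blast
    then show "card {U. U \<subseteq> e \<and> U \<noteq> {}} = 3" using card3 by simp
  qed simp
  also have "\<dots> = 3 ^ card M" by simp
  finally show ?thesis .
qed

lemma card_ESEC:
  assumes ph: "\<phi> \<in> CNFs I V rt par M"
  shows "card (ES I V rt par \<phi> \<inter> EC I V rt par S) = 2 ^ card M"
proof -
  obtain r where r: "\<forall>e\<in>M. r e \<in> e"
    and rs: "\<forall>S'. S \<subseteq>\<^sub>m S' \<longrightarrow> (satisfies_cnf S' \<phi> \<longleftrightarrow> (\<forall>e\<in>M. S' (r e) = Some True))"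
    using phi_r[OF ph] by blast
  have eqS: "ES I V rt par \<phi> \<inter> EC I V rt par S = {S'. dom S' = VH I V \<and> S \<subseteq>\<^sub>m S' \<and>
    (\<lambda>T. \<forall>e\<in>M. T \<inter> e \<noteq> {} \<and> r e \<in> T \<inter> e) {v \<in> \<Union>M. S' v = Some True}}"
  proof -
    have "ES I V rt par \<phi> \<inter> EC I V rt par S = {S' \<in> EC I V rt par S. satisfies_cnf S' \<phi>}"
      unfolding ES_def EC_def by blast
    also have "\<dots> = {S'. dom S' = VH I V \<and> S \<subseteq>\<^sub>m S' \<and>
      (\<lambda>T. \<forall>e\<in>M. T \<inter> e \<noteq> {} \<and> r e \<in> T \<inter> e) {v \<in> \<Union>M. S' v = Some True}}"
      unfolding EC_eq using rs r by (intro Collect_cong) blast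
    finally show ?thesis .
  qed
  have "card (ES I V rt par \<phi> \<inter> EC I V rt par S) = card {T. T \<subseteq> \<Union>M \<and> (\<forall>e\<in>M. T \<inter> e \<noteq> {} \<and> r e \<in> T \<inter> e)}"
    unfolding eqS by (rule count_ext)
  also have "\<dots> = (\<Prod>e\<in>M. card {U. U \<subseteq> e \<and> (U \<noteq> {} \<and> r e \<in> U)})"
    by (rule count_PiE[OF finM disjM])
  also have "\<dots> = (\<Prod>e\<in>M. 2)"
  proof (rule prod.cong)
    fix e assume e: "e \<in> M"
    then obtain a b where ab: "a \<noteq> b" "e = {a, b}" using M_two by blast
    have re: "r e \<in> e" using r e by blast
    obtain o' where o: "o' \<noteq> r e" "e = {r e, o'}"
    proof (cases "r e = a")
      case True then show ?thesis using that[of b] ab by simp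
    next
      case False then have "r e = b" using re ab by simp
      then show ?thesis using that[of a] ab by (simp add: insert_commute)
    qed
    have "{U. U \<subseteq> e \<and> (U \<noteq> {} \<and> r e \<in> U)} = {U. U \<subseteq> {r e, o'} \<and> r e \<in> U}" using o by blast
    then show "card {U. U \<subseteq> e \<and> (U \<noteq> {} \<and> r e \<in> U)} = 2" using card2[of "r e" o'] o(1) by simp
  qed simp
  also have "\<dots> = 2 ^ card M" by simp
  finally show ?thesis .
qed

lemma finSAT: "finite (SAT I V rt par)"
proof -
  have "SAT I V rt par \<subseteq> {m. dom m = VH I V \<and> ran m \<subseteq> (UNIV :: bool set)}" unfolding SAT_def by blast
  moreover have "finite {m. dom m = VH I V \<and> ran m \<subseteq> (UNIV :: bool set)}"
    by (rule finite_set_of_finite_maps[OF finVH]) simp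
  ultimately show ?thesis by (rule finite_subset)
qed

lemma main:
  assumes ph: "\<phi> \<in> CNFs I V rt par M"
  shows "cond_Pr I V rt par (ES I V rt par \<phi>) (EC I V rt par S) = (2/3) ^ card M"
proof -
  define c where "c = weight I V rt par S"
  have wc: "weight I V rt par S' = c" if "S' \<in> EC I V rt par S" for S'
  proof -
    have "S \<subseteq>\<^sub>m S'" using that unfolding EC_def by blast
    then have "Fix I V rt par S' = Fix I V rt par S" by (rule Fix_eq)
    then show ?thesis unfolding weight_def c_def by simp
  qed
  have cpos: "c > 0" unfolding c_def weight_def by simp
  have sub: "EC I V rt par S \<subseteq> SAT I V rt par" unfolding EC_def by blast
  have Y: "(\<Sum>S'\<in>EC I V rt par S. weight I V rt par S') = 3 ^ card M * c"
  proof -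
    have "(\<Sum>S'\<in>EC I V rt par S. weight I V rt par S') = (\<Sum>S'\<in>EC I V rt par S. c)"
      by (rule sum.cong) (simp_all add: wc)
    also have "\<dots> = real (card (EC I V rt par S)) * c" by simp
    also have "\<dots> = 3 ^ card M * c" by (simp only: card_EC) simp
    finally show ?thesis .
  qed
  have X: "(\<Sum>S'\<in>ES I V rt par \<phi> \<inter> EC I V rt par S. weight I V rt par S') = 2 ^ card M * c"
  proof -
    have "(\<Sum>S'\<in>ES I V rt par \<phi> \<inter> EC I V rt par S. weight I V rt par S') = (\<Sum>S'\<in>ES I V rt par \<phi> \<inter> EC I V rt par S. c)"
      by (rule sum.cong) (simp_all add: wc)
    also have "\<dots> = real (card (ES I V rt par \<phi> \<inter> EC I V rt par S)) * c" by simp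
    also have "\<dots> = 2 ^ card M * c" by (simp only: card_ESEC[OF ph]) simp
    finally show ?thesis .
  qed
  define Z where "Z = (\<Sum>S'\<in>SAT I V rt par. weight I V rt par S')"
  have "(\<Sum>S'\<in>EC I V rt par S. weight I V rt par S') \<le> Z"
    unfolding Z_def by (rule sum_mono2[OF finSAT sub]) (simp add: weight_def)
  moreover have "(3::real) ^ card M * c > 0" using cpos by simp
  ultimately have Zpos: "Z > 0" using Y by linarith
  have "cond_Pr I V rt par (ES I V rt par \<phi>) (EC I V rt par S) = (2 ^ card M * c / Z) / (3 ^ card M * c / Z)"
    unfolding cond_Pr_def Pr_def by (simp only: X Y Z_def[symmetric])
  also have "\<dots> = 2 ^ card M / 3 ^ card M" using Zpos cpos by (simp add: field_simps)
  also have "\<dots> = (2/3) ^ card M" by (simp add: power_divide)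
  finally show ?thesis .
qed

end

theorem lemma13:
  fixes I :: "'i set" and V :: "'i \<Rightarrow> 'v set" and rt :: "'i \<Rightarrow> 'v"
    and par :: "'i \<Rightarrow> 'v \<Rightarrow> 'v"
    and M :: "'v set set" and S :: "'v \<rightharpoonup> bool" and \<phi> :: "'v set set"
  assumes "btbg I V rt par"
    and "pseudomatching I V rt par M"
    and "dom S = VH I V - \<Union>M"
    and "comfortable1 I V rt par S M"
    and "\<phi> \<in> CNFs I V rt par M"
  shows "cond_Pr I V rt par (ES I V rt par \<phi>) (EC I V rt par S) = (2/3) ^ card M"
proof -
  interpret btS I V rt par M S
    using assms(1-4) by (unfold_locales) simp_all
  show ?thesis using main[OF assms(5)] .
qed


end
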